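(* Let $(G,\preceq)$ be a cc sponge group. Let $C\subseteq G$ be invariant under conjugation, with $\mathbf{1}\in C$ and $\mathbf{1}\preceq c$ for all $c\in C$, and assume that for all $x,y\in G$: if $y\in C$, $\mathbf{1}\preceq x$ and $x\preceq y$, then $x\in C$ and $x^{-1}\cdot y\in C$. Define the relation $\sqsubseteq$ on $G$ by $x\sqsubseteq y\iff x^{-1}\cdot y\in C$. Then $(G,\sqsubseteq)$ is a cc sponge group.
   Context: An orientation is a reflexive, antisymmetric binary relation. An oriented group is a group $G$ (operation $\cdot$, neutral element $\mathbf{1}$) with an orientation $\preceq$ such that $x\preceq y$ implies $x\cdot z\preceq y\cdot z$ and $z\cdot x\preceq z\cdot y$ for all $x,y,z$. A subset $P$ is right-bounded if some $s$ has $p\preceq s$ for all $p\in P$; the join of $P$ is an $x$ with $p\preceq x$ for all $p\in P$ and $x\preceq y$ whenever $p\preceq y$ for all $p\in P$. An oriented set is a cc sponge if every nonempty right-bounded subset has a join. A cc sponge group is an oriented group that is a cc sponge. *)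

theory Defs
  imports "HOL-Algebra.Group"
begin

definition orientation :: "'a set \<Rightarrow> ('a \<Rightarrow> 'a \<Rightarrow> bool) \<Rightarrow> bool" where
  "orientation S R \<longleftrightarrow>
     (\<forall>x\<in>S. R x x) \<and> (\<forall>x\<in>S. \<forall>y\<in>S. R x y \<and> R y x \<longrightarrow> x = y)"

definition oriented_group :: "('a, 'b) monoid_scheme \<Rightarrow> ('a \<Rightarrow> 'a \<Rightarrow> bool) \<Rightarrow> bool" where
  "oriented_group G R \<longleftrightarrow> group G \<and> orientation (carrier G) R \<and>
     (\<forall>x\<in>carrier G. \<forall>y\<in>carrier G. \<forall>z\<in>carrier G. R x y \<longrightarrow>
        R (x \<otimes>\<^bsub>G\<^esub> z) (y \<otimes>\<^bsub>G\<^esub> z) \<and> R (z \<otimes>\<^bsub>G\<^esub> x) (z \<otimes>\<^bsub>G\<^esub> y))"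

definition right_bounded :: "'a set \<Rightarrow> ('a \<Rightarrow> 'a \<Rightarrow> bool) \<Rightarrow> 'a set \<Rightarrow> bool" where
  "right_bounded S R P \<longleftrightarrow> (\<exists>s\<in>S. \<forall>p\<in>P. R p s)"

definition is_join :: "'a set \<Rightarrow> ('a \<Rightarrow> 'a \<Rightarrow> bool) \<Rightarrow> 'a set \<Rightarrow> 'a \<Rightarrow> bool" where
  "is_join S R P x \<longleftrightarrow> x \<in> S \<and> (\<forall>p\<in>P. R p x) \<and>
     (\<forall>y\<in>S. (\<forall>p\<in>P. R p y) \<longrightarrow> R x y)"

definition cc_sponge :: "'a set \<Rightarrow> ('a \<Rightarrow> 'a \<Rightarrow> bool) \<Rightarrow> bool" where
  "cc_sponge S R \<longleftrightarrow> orientation S R \<and>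
     (\<forall>P. P \<subseteq> S \<and> P \<noteq> {} \<and> right_bounded S R P \<longrightarrow> (\<exists>x. is_join S R P x))"

definition cc_sponge_group :: "('a, 'b) monoid_scheme \<Rightarrow> ('a \<Rightarrow> 'a \<Rightarrow> bool) \<Rightarrow> bool" where
  "cc_sponge_group G R \<longleftrightarrow> oriented_group G R \<and> cc_sponge (carrier G) R"

end

theory Submission
  imports Defs
begin

lemma (in group) main_aux:
  fixes R :: "'a \<Rightarrow> 'a \<Rightarrow> bool" and C :: "'a set"
  assumes sponge: "cc_sponge_group G R"
    and C_sub: "C \<subseteq> carrier G"
    and C_conj: "\<forall>g\<in>carrier G. \<forall>c\<in>C. g \<otimes> c \<otimes> inv g \<in> C"
    and C_one: "\<one> \<in> C"
    and C_pos: "\<forall>c\<in>C. R \<one> c"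
    and C_convex: "\<forall>x\<in>carrier G. \<forall>y\<in>carrier G.
        y \<in> C \<and> R \<one> x \<and> R x y \<longrightarrow> x \<in> C \<and> inv x \<otimes> y \<in> C"
  shows "cc_sponge_group G (\<lambda>x y. inv x \<otimes> y \<in> C)"
proof -
  define S where "S = (\<lambda>x y. inv\<^bsub>G\<^esub> x \<otimes>\<^bsub>G\<^esub> y \<in> C)"
  have grp: "group G" and orR: "orientation (carrier G) R"
    and cmp: "\<And>x y z. x \<in> carrier G \<Longrightarrow> y \<in> carrier G \<Longrightarrow> z \<in> carrier G \<Longrightarrow> R x y \<Longrightarrow>
        R (x \<otimes>\<^bsub>G\<^esub> z) (y \<otimes>\<^bsub>G\<^esub> z) \<and> R (z \<otimes>\<^bsub>G\<^esub> x) (z \<otimes>\<^bsub>G\<^esub> y)"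
    and spR: "cc_sponge (carrier G) R"
    using sponge unfolding cc_sponge_group_def oriented_group_def by blast+
  have Rrefl: "\<And>x. x \<in> carrier G \<Longrightarrow> R x x" using orR unfolding orientation_def by blast
  have Ranti: "\<And>x y. x \<in> carrier G \<Longrightarrow> y \<in> carrier G \<Longrightarrow> R x y \<Longrightarrow> R y x \<Longrightarrow> x = y"
    using orR unfolding orientation_def by blast
  have SR: "R x y" if "x \<in> carrier G" "y \<in> carrier G" "S x y" for x y
  proof -
    have "R \<one> (inv x \<otimes> y)" using C_pos that unfolding S_def by blast
    hence "R (x \<otimes> \<one>) (x \<otimes> (inv x \<otimes> y))" using cmp[of "\<one>" "inv x \<otimes> y" x] that by simp
    moreover have "x \<otimes> (inv x \<otimes> y) = y" using that by (simp add: m_assoc[symmetric])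
    ultimately show ?thesis using that by simp
  qed
  have orS: "orientation (carrier G) S"
    unfolding orientation_def
  proof (intro conjI ballI impI)
    fix x assume "x \<in> carrier G" thus "S x x" unfolding S_def using C_one by simp
  next
    fix x y assume xy: "x \<in> carrier G" "y \<in> carrier G" "S x y \<and> S y x"
    define c where "c = inv x \<otimes> y"
    have cG: "c \<in> carrier G" using xy c_def by simp
    have cC: "c \<in> C" using xy c_def S_def by simp
    have "inv c = inv y \<otimes> x" using xy c_def by (simp add: inv_mult_group)
    hence ciC: "inv c \<in> C" using xy S_def by simp
    have r1: "R \<one> c" using C_pos cC by blast
    have "R \<one> (inv c)" using C_pos ciC by blast
    hence "R (\<one> \<otimes> c) (inv c \<otimes> c)" using cmp[of "\<one>" "inv c" c] cG by simp
    hence "R c \<one>" using cG by simp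
    hence "c = \<one>" using Ranti r1 cG by simp
    hence "x \<otimes> (inv x \<otimes> y) = x \<otimes> \<one>" using c_def by simp
    moreover have "x \<otimes> (inv x \<otimes> y) = y" using xy by (simp add: m_assoc[symmetric])
    ultimately show "x = y" using xy by simp
  qed
  have cmpS: "S (x \<otimes> z) (y \<otimes> z) \<and> S (z \<otimes> x) (z \<otimes> y)"
    if "x \<in> carrier G" "y \<in> carrier G" "z \<in> carrier G" "S x y" for x y z
  proof
    have "inv x \<otimes> y \<in> C" using that S_def by simp
    hence "inv z \<otimes> (inv x \<otimes> y) \<otimes> inv (inv z) \<in> C" using C_conj that by blast
    thus "S (x \<otimes> z) (y \<otimes> z)" unfolding S_def using that
      by (simp add: inv_mult_group m_assoc)
    have "inv (z \<otimes> x) \<otimes> (z \<otimes> y) = inv x \<otimes> y"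
    proof -
      have "inv (z \<otimes> x) \<otimes> (z \<otimes> y) = inv x \<otimes> (inv z \<otimes> (z \<otimes> y))"
        using that by (simp add: inv_mult_group m_assoc)
      also have "inv z \<otimes> (z \<otimes> y) = y" using that by (simp add: m_assoc[symmetric])
      finally show ?thesis .
    qed
    thus "S (z \<otimes> x) (z \<otimes> y)" unfolding S_def using that S_def by simp
  qed
  have spS: "cc_sponge (carrier G) S"
    unfolding cc_sponge_def
  proof (intro conjI allI impI)
    show "orientation (carrier G) S" by (rule orS)
  next
    fix P assume P: "P \<subseteq> carrier G \<and> P \<noteq> {} \<and> right_bounded (carrier G) S P"
    then obtain s where sG: "s \<in> carrier G" and sP: "\<forall>p\<in>P. S p s"
      unfolding right_bounded_def by blast
    have "right_bounded (carrier G) R P" unfolding right_bounded_def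
      using sG sP SR P by blast
    then obtain j where j: "is_join (carrier G) R P j" using spR P unfolding cc_sponge_def by blast
    have jG: "j \<in> carrier G" and pj: "\<forall>p\<in>P. R p j"
      and jl: "\<forall>y\<in>carrier G. (\<forall>p\<in>P. R p y) \<longrightarrow> R j y" using j unfolding is_join_def by blast+
    have js: "R j s" using jl sG sP SR P by blast
    have key: "inv p \<otimes> j \<in> C \<and> inv (inv p \<otimes> j) \<otimes> (inv p \<otimes> y) \<in> C"
      if pP: "p \<in> P" and yG: "y \<in> carrier G" and py: "S p y" and jy: "R j y" for p y
    proof -
      have pG: "p \<in> carrier G" using pP P by blast
      have "R (inv p \<otimes> p) (inv p \<otimes> j)" using cmp[of p j "inv p"] pG jG pj pP by simp
      hence a: "R \<one> (inv p \<otimes> j)" using pG by simp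
      have b: "R (inv p \<otimes> j) (inv p \<otimes> y)" using cmp[of j y "inv p"] pG jG yG jy by simp
      have "inv p \<otimes> y \<in> C" using py S_def by simp
      moreover have "inv p \<otimes> j \<in> carrier G" "inv p \<otimes> y \<in> carrier G" using pG jG yG by simp_all
      ultimately show ?thesis using C_convex a b by blast
    qed
    have "is_join (carrier G) S P j"
      unfolding is_join_def
    proof (intro conjI ballI impI)
      show "j \<in> carrier G" by (rule jG)
    next
      fix p assume "p \<in> P" thus "S p j" using key[of p s] sG sP js unfolding S_def by blast
    next
      fix y assume yG: "y \<in> carrier G" and yP: "\<forall>p\<in>P. S p y"
      have jy: "R j y" using jl yG yP SR P by blast
      obtain p where pP: "p \<in> P" using P by blast
      have pG: "p \<in> carrier G" using pP P by blast
      have "inv (inv p \<otimes> j) \<otimes> (inv p \<otimes> y) \<in> C" using key[of p y] pP yG yP jy by blast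
      moreover have "inv (inv p \<otimes> j) \<otimes> (inv p \<otimes> y) = inv j \<otimes> y"
      proof -
        have "inv (inv p \<otimes> j) \<otimes> (inv p \<otimes> y) = inv j \<otimes> (p \<otimes> (inv p \<otimes> y))"
          using pG jG yG by (simp add: inv_mult_group m_assoc)
        also have "p \<otimes> (inv p \<otimes> y) = y" using pG yG by (simp add: m_assoc[symmetric])
        finally show ?thesis .
      qed
      ultimately show "S j y" unfolding S_def by simp
    qed
    thus "\<exists>x. is_join (carrier G) S P x" by blast
  qed
  show ?thesis
    unfolding cc_sponge_group_def oriented_group_def S_def[symmetric]
    using grp orS cmpS spS by blast
qed


theorem mainTheorem10:
  fixes G :: "('a, 'b) monoid_scheme" and R :: "'a \<Rightarrow> 'a \<Rightarrow> bool" and C :: "'a set"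
  assumes sponge: "cc_sponge_group G R"
    and C_sub: "C \<subseteq> carrier G"
    and C_conj: "\<forall>g\<in>carrier G. \<forall>c\<in>C. g \<otimes>\<^bsub>G\<^esub> c \<otimes>\<^bsub>G\<^esub> inv\<^bsub>G\<^esub> g \<in> C"
    and C_one: "\<one>\<^bsub>G\<^esub> \<in> C"
    and C_pos: "\<forall>c\<in>C. R \<one>\<^bsub>G\<^esub> c"
    and C_convex: "\<forall>x\<in>carrier G. \<forall>y\<in>carrier G.
        y \<in> C \<and> R \<one>\<^bsub>G\<^esub> x \<and> R x y \<longrightarrow> x \<in> C \<and> inv\<^bsub>G\<^esub> x \<otimes>\<^bsub>G\<^esub> y \<in> C"
  shows "cc_sponge_group G (\<lambda>x y. inv\<^bsub>G\<^esub> x \<otimes>\<^bsub>G\<^esub> y \<in> C)"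
proof -
  have "group G" using sponge unfolding cc_sponge_group_def oriented_group_def by simp
  thus ?thesis by (rule group.main_aux[OF _ sponge C_sub C_conj C_one C_pos C_convex])
qed

end
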